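(* Consider a CPM scheme with alphabet size $M>2$, impulse length $L$ and modulation index $h=Q/P$ ($Q,P$ relatively prime positive integers). Suppose that every difference sequence $\mathbf{b}$ achieving the minimum Euclidean distance of the scheme has length $\Delta(\mathbf{b})=2$ and $b_2=\pm1$, and that $P$ is a multiple of $M$. Then there exists a partition of the set of trellis edges into $M$ sets $\mathcal{T}(0),\dots,\mathcal{T}(M-1)$, each of cardinality $PM^{L-1}$, such that (i) for every difference sequence $\mathbf{b}$ achieving the minimum Euclidean distance, any two edges adjacent in $\mathcal{G}(\mathbf{b})$ lie in the same set, and (ii) any two distinct edges leaving the same trellis state lie in different sets.
   Context: CPM trellis (Rimoldi decomposition). Fix $M\ge2$, $L\ge1$, relatively prime positive integers $Q,P$, $h=Q/P$. Input symbols $a_n\in\{0,\dots,M-1\}$. The state at time $n$ is $(a_{n-L+1},\dots,a_{n-1};\beta_n)$ with $\beta_n\in\{0,\dots,P-1\}$ and $\beta_{n+1}=(\beta_n+Qa_{n-L+1})_P$ ($(l)_P$ = $l$ mod $P$). A trellis edge is $(\boldsymbol{\alpha},\beta)$, $\boldsymbol{\alpha}=(\alpha_1,\dots,\alpha_L)\in\{0,\dots,M-1\}^L$, $\beta$ the phase of its starting state $((\alpha_1,\dots,\alpha_{L-1});\beta)$; its ending state is $((\alpha_2,\dots,\alpha_L);(\beta+Q\alpha_1)_P)$. There are $PM^L$ edges. CPM signal: an input sequence $(a_n)$ produces $x(t)=\exp\!\big(j\,2\pi h\sum_n(2a_n-(M-1))\,q(t-nT)\big)$ (up to a constant amplitude),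 where $T>0$ and the phase pulse $q$ is continuous with $q(t)=0$ for $t\le0$ and $q(t)=1/2$ for $t\ge LT$. A difference sequence is $\mathbf{b}=(b_1,\dots,b_\Delta)$ with entries in $\{-(M-1),\dots,M-1\}$, $b_1\ne0$, $b_\Delta\ne0$, admitting error events (i.e. $\sum_n b_n\equiv0\pmod P$); $\Delta(\mathbf{b})=\Delta$. An error event generated by $\mathbf{b}$ is a pair of trellis paths from a common starting state with inputs $a^{(1)},a^{(2)}$ such that $a^{(1)}_n-a^{(2)}_n=b_n$ for $1\le n\le\Delta$ and equal inputs afterwards, merging after $\Delta+L-1$ steps; an edge pair is the two edges at the same step. The squared Euclidean distance $\int|x^{(1)}(t)-x^{(2)}(t)|^2dt$ of an error event depends only on $\mathbf{b}$; the minimum Euclidean distance of the scheme is its minimum over all difference sequences. Graph $\mathcal{G}(\mathbf{b})$: vertices are trellis edges; two vertices are adjacent iff the edges have different starting states and form an edge pair of some error event generated by $\mathbf{b}$. *)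

theory Defs
  imports "HOL-Analysis.Analysis"
begin

text \<open>CPM trellis (Rimoldi decomposition). A trellis edge is a pair
  (alpha, beta) with alpha a list of length L over {0..M-1} and beta in {0..P-1}.\<close>

definition cpm_edges :: "nat \<Rightarrow> nat \<Rightarrow> nat \<Rightarrow> (nat list \<times> nat) set" where
  "cpm_edges M L P = {(\<alpha>, \<beta>). length \<alpha> = L \<and> (\<forall>x\<in>set \<alpha>. x < M) \<and> \<beta> < P}"

definition start_state :: "nat \<Rightarrow> nat list \<times> nat \<Rightarrow> nat list \<times> nat" where
  "start_state L e = (take (L - 1) (fst e), snd e)"

definition end_state :: "nat \<Rightarrow> nat \<Rightarrow> nat list \<times> nat \<Rightarrow> nat list \<times> nat" where
  "end_state Q P e = (drop 1 (fst e), (snd e + Q * hd (fst e)) mod P)"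

text \<open>Phase beta_n at time n \<ge> 1 of the path with inputs a (indexed by integers),
  whose phase at time 1 is beta1: beta_{n+1} = (beta_n + Q a_{n-L+1}) mod P.\<close>
definition cpm_phase :: "nat \<Rightarrow> nat \<Rightarrow> nat \<Rightarrow> nat \<Rightarrow> (int \<Rightarrow> nat) \<Rightarrow> nat \<Rightarrow> nat" where
  "cpm_phase L Q P \<beta>1 a n = (\<beta>1 + Q * (\<Sum>k\<in>{2 - int L .. int n - int L}. a k)) mod P"

text \<open>Trellis edge traversed at step n (from the state at time n to the state at time n+1):
  alpha = (a_{n-L+1},...,a_n), beta = beta_n.\<close>
definition path_edge :: "nat \<Rightarrow> nat \<Rightarrow> nat \<Rightarrow> nat \<Rightarrow> (int \<Rightarrow> nat) \<Rightarrow> nat \<Rightarrow> nat list \<times> nat" where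
  "path_edge L Q P \<beta>1 a n =
     (map (\<lambda>i. a (int n - int L + 1 + int i)) [0..<L], cpm_phase L Q P \<beta>1 a n)"

text \<open>Difference sequences b = (b_1..b_Delta) (list, b_n = b ! (n-1)) admitting error events.\<close>
definition is_diff_seq :: "nat \<Rightarrow> nat \<Rightarrow> int list \<Rightarrow> bool" where
  "is_diff_seq M P b \<longleftrightarrow> b \<noteq> [] \<and> (\<forall>x\<in>set b. \<bar>x\<bar> \<le> int M - 1) \<and>
     hd b \<noteq> 0 \<and> last b \<noteq> 0 \<and> int P dvd sum_list b"

text \<open>An error event generated by b: two trellis paths with inputs a1, a2 starting at time 1
  from a common state (common past inputs, common phase beta1), with a1_n - a2_n = b_n for
  1 \<le> n \<le> Delta, equal inputs afterwards, merging after Delta+L-1 steps.\<close>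
definition error_event ::
  "nat \<Rightarrow> nat \<Rightarrow> nat \<Rightarrow> nat \<Rightarrow> int list \<Rightarrow> nat \<Rightarrow> (int \<Rightarrow> nat) \<Rightarrow> (int \<Rightarrow> nat) \<Rightarrow> bool" where
  "error_event M L Q P b \<beta>1 a1 a2 \<longleftrightarrow>
     is_diff_seq M P b \<and> \<beta>1 < P \<and>
     (\<forall>k. a1 k < M \<and> a2 k < M) \<and>
     (\<forall>k\<le>0. a1 k = a2 k) \<and>
     (\<forall>k>int (length b). a1 k = a2 k) \<and>
     (\<forall>n\<in>{1..length b}. int (a1 (int n)) - int (a2 (int n)) = b ! (n - 1)) \<and>
     cpm_phase L Q P \<beta>1 a1 (length b + L) = cpm_phase L Q P \<beta>1 a2 (length b + L)"

definition adjacent_G ::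
  "nat \<Rightarrow> nat \<Rightarrow> nat \<Rightarrow> nat \<Rightarrow> int list \<Rightarrow> nat list \<times> nat \<Rightarrow> nat list \<times> nat \<Rightarrow> bool" where
  "adjacent_G M L Q P b e e' \<longleftrightarrow>
     e \<in> cpm_edges M L P \<and> e' \<in> cpm_edges M L P \<and> start_state L e \<noteq> start_state L e' \<and>
     (\<exists>\<beta>1 a1 a2 n. error_event M L Q P b \<beta>1 a1 a2 \<and> 1 \<le> n \<and> n \<le> length b + L - 1 \<and>
        {e, e'} = {path_edge L Q P \<beta>1 a1 n, path_edge L Q P \<beta>1 a2 n})"

text \<open>Squared Euclidean distance of an error event generated by b:
  |x1(t) - x2(t)|^2 = |1 - exp(j(phi1(t) - phi2(t)))|^2 with
  phi1(t) - phi2(t) = 2 pi h sum_{n=1}^{Delta} 2 b_n q(t - nT).\<close>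
definition sq_dist :: "nat \<Rightarrow> nat \<Rightarrow> real \<Rightarrow> (real \<Rightarrow> real) \<Rightarrow> int list \<Rightarrow> real" where
  "sq_dist Q P T q b =
     (\<integral>t. (cmod (1 - exp (\<i> * complex_of_real
        (2 * pi * (real Q / real P) *
          (\<Sum>i<length b. 2 * real_of_int (b ! i) * q (t - real (i + 1) * T))))))\<^sup>2 \<partial>lborel)"

definition achieves_min_dist :: "nat \<Rightarrow> nat \<Rightarrow> nat \<Rightarrow> real \<Rightarrow> (real \<Rightarrow> real) \<Rightarrow> int list \<Rightarrow> bool" where
  "achieves_min_dist M Q P T q b \<longleftrightarrow>
     is_diff_seq M P b \<and> (\<forall>b'. is_diff_seq M P b' \<longrightarrow> sq_dist Q P T q b \<le> sq_dist Q P T q b')"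

end

theory Submission
  imports Defs "HOL-Number_Theory.Cong"
begin

definition FF :: "nat \<Rightarrow> nat \<Rightarrow> nat list \<times> nat \<Rightarrow> nat" where
  "FF M Q e = (snd e + Q * sum_list (fst e)) mod M"

lemma inj_last:
  fixes Q M c x y :: nat
  assumes "coprime Q M" "x < M" "y < M" "(c + Q*x) mod M = (c + Q*y) mod M"
  shows "x = y"
proof -
  have "[c + Q*x = c + Q*y] (mod M)" using assms(4) by (simp add: cong_def)
  then have "[Q*x = Q*y] (mod M)" by (simp add: cong_add_lcancel_nat)
  then have "[x = y] (mod M)" using assms(1) by (simp add: cong_mult_lcancel_nat)
  then show ?thesis using assms(2,3) cong_less_modulus_unique_nat by blast
qed

lemma int_split:
  fixes f :: "int \<Rightarrow> nat"
  assumes "m \<le> p + 1" "p \<le> r"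
  shows "sum f {m..p} + sum f {p+1..r} = sum f {m..r}"
proof -
  have "{m..r} = {m..p} \<union> {p+1..r}" using assms by auto
  moreover have "{m..p} \<inter> {p+1..r} = {}" by auto
  ultimately show ?thesis by (simp add: sum.union_disjoint)
qed

lemma reidx:
  fixes a :: "int \<Rightarrow> nat"
  shows "(\<Sum>i<L. a (c + int i)) = (\<Sum>k\<in>{c..c + int L - 1}. a k)"
proof -
  have inj: "inj_on (\<lambda>i. c + int i) {..<L}" by (auto simp: inj_on_def)
  have img: "(\<lambda>i. c + int i) ` {..<L} = {c..c + int L - 1}"
  proof
    show "(\<lambda>i. c + int i) ` {..<L} \<subseteq> {c..c + int L - 1}" by auto
  next
    show "{c..c + int L - 1} \<subseteq> (\<lambda>i. c + int i) ` {..<L}"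
    proof
      fix k assume "k \<in> {c..c + int L - 1}"
      then have "k = c + int (nat (k - c))" "nat (k - c) < L" by auto
      then show "k \<in> (\<lambda>i. c + int i) ` {..<L}" by blast
    qed
  qed
  show ?thesis using sum.reindex[OF inj, of a] img by simp
qed


lemma modmod: "M dvd (P::nat) \<Longrightarrow> (x mod P + y) mod M = (x + y) mod M"
  by (metis mod_add_left_eq mod_mod_cancel)

lemma FF_path:
  assumes "M dvd P" "L \<ge> 1" "n \<ge> 1"
  shows "FF M Q (path_edge L Q P \<beta>1 a n) = (\<beta>1 + Q * (\<Sum>k\<in>{2 - int L .. int n}. a k)) mod M"
proof -
  define X where "X = \<beta>1 + Q * (\<Sum>k\<in>{2 - int L .. int n - int L}. a k)"
  define Y where "Y = (\<Sum>i<L. a (int n - int L + 1 + int i))"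
  have sl: "sum_list (map (\<lambda>i. a (int n - int L + 1 + int i)) [0..<L]) = Y"
    unfolding Y_def by (simp add: interv_sum_list_conv_sum_set_nat atLeast0LessThan)
  have Y: "Y = (\<Sum>k\<in>{int n - int L + 1 .. int n}. a k)"
    using reidx[of a "int n - int L + 1" L] unfolding Y_def by simp
  have spl: "(\<Sum>k\<in>{2 - int L .. int n - int L}. a k) + Y = (\<Sum>k\<in>{2 - int L .. int n}. a k)"
    using int_split[of "2 - int L" "int n - int L" "int n" a] assms Y by simp
  have "FF M Q (path_edge L Q P \<beta>1 a n) = (cpm_phase L Q P \<beta>1 a n + Q * Y) mod M"
    unfolding FF_def path_edge_def by (simp only: fst_conv snd_conv sl)
  also have "cpm_phase L Q P \<beta>1 a n = X mod P" unfolding cpm_phase_def X_def by simp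
  also have "(X mod P + Q * Y) mod M = (X + Q * Y) mod M"
    by (rule modmod[OF assms(1)])
  also have "X + Q * Y = \<beta>1 + Q * (\<Sum>k\<in>{2 - int L .. int n}. a k)"
    unfolding X_def using spl by (metis add.assoc distrib_left)
  finally show ?thesis .
qed

lemma start_eq1:
  assumes "\<forall>k\<le>0. a1 k = a2 k" "L \<ge> 1"
  shows "start_state L (path_edge L Q P \<beta>1 a1 1) = start_state L (path_edge L Q P \<beta>1 a2 1)"
proof -
  have t: "take (L - 1) [0..<L] = [0..<L-1]" using assms(2) by (simp add: take_upt)
  have m: "map (\<lambda>i. a1 (int 1 - int L + 1 + int i)) [0..<L-1] = map (\<lambda>i. a2 (int 1 - int L + 1 + int i)) [0..<L-1]"
  proof (rule map_cong[OF refl])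
    fix i assume "i \<in> set [0..<L-1]"
    then have "int 1 - int L + 1 + int i \<le> 0" by auto
    then show "a1 (int 1 - int L + 1 + int i) = a2 (int 1 - int L + 1 + int i)" using assms(1) by blast
  qed
  have p: "cpm_phase L Q P \<beta>1 a1 1 = cpm_phase L Q P \<beta>1 a2 1"
    unfolding cpm_phase_def by simp
  show ?thesis unfolding start_state_def path_edge_def using t m p by (simp add: take_map)
qed

lemma FF_event:
  assumes ev: "error_event M L Q P b \<beta>1 a1 a2" and len: "length b = 2"
    and "M dvd P" "L \<ge> 1" "2 \<le> n"
  shows "FF M Q (path_edge L Q P \<beta>1 a1 n) = FF M Q (path_edge L Q P \<beta>1 a2 n)"
proof -
  let ?I = "{2 - int L .. int n}"
  define S1 where "S1 = (\<Sum>k\<in>?I. a1 k)"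
  define S2 where "S2 = (\<Sum>k\<in>?I. a2 k)"
  define d where "d k = int (a1 k) - int (a2 k)" for k
  from ev have z1: "\<forall>k\<le>0. a1 k = a2 k" and z2: "\<forall>k>int (length b). a1 k = a2 k"
    and bd: "\<forall>n\<in>{1..length b}. int (a1 (int n)) - int (a2 (int n)) = b ! (n - 1)"
    and ds: "is_diff_seq M P b"
    unfolding error_event_def by auto
  have d1: "d 1 = b ! 0" using bd len unfolding d_def by (metis One_nat_def atLeastAtMost_iff diff_self_eq_0 le_refl of_nat_1 one_le_numeral)
  have d2: "d 2 = b ! 1" using bd len unfolding d_def
    by (metis atLeastAtMost_iff diff_add_inverse2 le_refl nat_1_add_1 of_nat_numeral one_le_numeral)
  have "int S1 - int S2 = (\<Sum>k\<in>?I. d k)"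
    unfolding S1_def S2_def d_def by (simp add: sum_subtractf)
  also have "\<dots> = (\<Sum>k\<in>{1,2}. d k)"
  proof (rule sum.mono_neutral_right)
    show "finite ?I" by simp
    show "{1, 2} \<subseteq> ?I" using assms(4,5) by auto
    show "\<forall>i\<in>?I - {1, 2}. d i = 0"
    proof
      fix i assume "i \<in> ?I - {1,2}"
      then have "i \<le> 0 \<or> i > int (length b)" using len by auto
      then show "d i = 0" using z1 z2 unfolding d_def by auto
    qed
  qed
  also have "\<dots> = b ! 0 + b ! 1" using d1 d2 by simp
  also have "\<dots> = sum_list b"
  proof -
    obtain x y where "b = [x, y]" using len
      by (metis (no_types, lifting) One_nat_def Suc_length_conv length_0_conv numeral_2_eq_2)
    then show ?thesis by simp
  qed
  finally have diff: "int S1 - int S2 = sum_list b" .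
  have "int P dvd sum_list b" using ds unfolding is_diff_seq_def by auto
  then have "int M dvd int S1 - int S2" using diff assms(3) by (metis dvd_trans int_dvd_int_iff)
  then have "int M dvd int (\<beta>1 + Q * S1) - int (\<beta>1 + Q * S2)"
    by (simp add: right_diff_distrib[symmetric])
  then have "int (\<beta>1 + Q * S1) mod int M = int (\<beta>1 + Q * S2) mod int M"
    by (simp add: mod_eq_dvd_iff)
  then have "(\<beta>1 + Q * S1) mod M = (\<beta>1 + Q * S2) mod M"
    by (metis of_nat_eq_iff of_nat_mod)
  then show ?thesis using FF_path[OF assms(3,4)] assms(5) unfolding S1_def S2_def by simp
qed

lemma edge_dec:
  assumes "e \<in> cpm_edges M L P" "L \<ge> 1"
  shows "fst e = take (L - 1) (fst e) @ [last (fst e)]"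
    "FF M Q e = ((snd e + Q * sum_list (take (L - 1) (fst e))) + Q * last (fst e)) mod M"
    "last (fst e) < M" "length (fst e) = L" "snd e < P" "set (take (L - 1) (fst e)) \<subseteq> {..<M}"
proof -
  have l: "length (fst e) = L" and s: "\<forall>x\<in>set (fst e). x < M" and b: "snd e < P"
    using assms(1) unfolding cpm_edges_def by auto
  have ne: "fst e \<noteq> []" using l assms(2) by auto
  have bt: "take (L - 1) (fst e) = butlast (fst e)" using l by (simp add: butlast_conv_take)
  show 1: "fst e = take (L - 1) (fst e) @ [last (fst e)]" using ne bt by simp
  have "sum_list (fst e) = sum_list (take (L - 1) (fst e)) + last (fst e)"
    using arg_cong[OF 1, of sum_list] by simp
  then show "FF M Q e = ((snd e + Q * sum_list (take (L - 1) (fst e))) + Q * last (fst e)) mod M"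
    unfolding FF_def by (simp add: algebra_simps)
  show "last (fst e) < M" using ne s by simp
  show "length (fst e) = L" "snd e < P" using l b by auto
  show "set (take (L - 1) (fst e)) \<subseteq> {..<M}" using s by (auto dest: in_set_takeD)
qed

lemma same_start_eq:
  assumes "e \<in> cpm_edges M L P" "e' \<in> cpm_edges M L P" "L \<ge> 1" "coprime Q M"
    "start_state L e = start_state L e'" "FF M Q e = FF M Q e'"
  shows "e = e'"
proof -
  have tt: "take (L - 1) (fst e) = take (L - 1) (fst e')" and ss: "snd e = snd e'"
    using assms(5) unfolding start_state_def by auto
  let ?c = "snd e + Q * sum_list (take (L - 1) (fst e))"
  have "(?c + Q * last (fst e)) mod M = (?c + Q * last (fst e')) mod M"
    using edge_dec(2)[OF assms(1,3), of Q] edge_dec(2)[OF assms(2,3), of Q] assms(6) tt ss by simp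
  then have "last (fst e) = last (fst e')"
    by (rule inj_last[OF assms(4) edge_dec(3)[OF assms(1,3)] edge_dec(3)[OF assms(2,3)]])
  then have "fst e = fst e'" using edge_dec(1)[OF assms(1,3)] edge_dec(1)[OF assms(2,3)] tt by metis
  then show ?thesis using ss by (simp add: prod_eq_iff)
qed

lemma card_class:
  assumes "L \<ge> 1" "coprime Q M" "M > 0" "i < M"
  shows "card {e \<in> cpm_edges M L P. FF M Q e = i} = P * M ^ (L - 1)"
proof -
  define S where "S = {s. set s \<subseteq> {..<M} \<and> length s = L - 1} \<times> {..<P}"
  have "card {s. set s \<subseteq> {..<M} \<and> length s = L - 1} = M ^ (L - 1)"
    using card_lists_length_eq[of "{..<M}" "L - 1"] by simp
  then have cS: "card S = P * M ^ (L - 1)" unfolding S_def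
    by (simp add: card_cartesian_product)
  have "bij_betw (start_state L) {e \<in> cpm_edges M L P. FF M Q e = i} S"
  proof (rule bij_betw_imageI)
    show "inj_on (start_state L) {e \<in> cpm_edges M L P. FF M Q e = i}"
    proof (rule inj_onI)
      fix e e' assume "e \<in> {e \<in> cpm_edges M L P. FF M Q e = i}" "e' \<in> {e \<in> cpm_edges M L P. FF M Q e = i}"
        "start_state L e = start_state L e'"
      then show "e = e'" using same_start_eq[OF _ _ assms(1,2), of e P e'] by simp
    qed
    show "start_state L ` {e \<in> cpm_edges M L P. FF M Q e = i} = S"
    proof
      show "start_state L ` {e \<in> cpm_edges M L P. FF M Q e = i} \<subseteq> S"
      proof
        fix x assume "x \<in> start_state L ` {e \<in> cpm_edges M L P. FF M Q e = i}"
        then obtain e where e: "e \<in> cpm_edges M L P" "x = start_state L e" by auto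
        show "x \<in> S" using edge_dec(4,5,6)[OF e(1) assms(1)] e(2) unfolding S_def start_state_def by auto
      qed
    next
      show "S \<subseteq> start_state L ` {e \<in> cpm_edges M L P. FF M Q e = i}"
      proof
        fix x assume "x \<in> S"
        then obtain s \<beta> where x: "x = (s, \<beta>)" "set s \<subseteq> {..<M}" "length s = L - 1" "\<beta> < P"
          unfolding S_def by auto
        define c where "c = \<beta> + Q * sum_list s"
        define f where "f y = (c + Q * y) mod M" for y
        have "f ` {..<M} = {..<M}"
        proof (rule endo_inj_surj)
          show "f ` {..<M} \<subseteq> {..<M}" using assms(3) unfolding f_def by auto
          show "inj_on f {..<M}"
          proof (rule inj_onI)
            fix u v assume "u \<in> {..<M}" "v \<in> {..<M}" "f u = f v"
            then show "u = v" using inj_last[OF assms(2), of u v c] unfolding f_def by simp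
          qed
        qed simp
        then obtain y where y: "y < M" "f y = i" using assms(4) by (metis imageE lessThan_iff)
        define e where "e = (s @ [y], \<beta>)"
        have ee: "e \<in> cpm_edges M L P" using x y assms(1) unfolding e_def cpm_edges_def by auto
        have "FF M Q e = i" proof -
          have "FF M Q e = f y" unfolding FF_def e_def f_def c_def by (simp add: distrib_left add.assoc)
          then show ?thesis using y by simp
        qed
        moreover have "start_state L e = x" using x unfolding e_def start_state_def by simp
        ultimately show "x \<in> start_state L ` {e \<in> cpm_edges M L P. FF M Q e = i}" using ee by blast
      qed
    qed
  qed
  from bij_betw_same_card[OF this] show ?thesis using cS by simp
qed
theorem proposition4:
  fixes M L Q P :: nat and T :: real and q :: "real \<Rightarrow> real"
  assumes "M > 2" and "L \<ge> 1" and "Q > 0" and "P > 0" and "coprime Q P"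
    and "T > 0" and "continuous_on UNIV q"
    and "\<forall>t\<le>0. q t = 0" and "\<forall>t\<ge>real L * T. q t = 1/2"
    and "\<forall>b. achieves_min_dist M Q P T q b \<longrightarrow> length b = 2 \<and> \<bar>b ! 1\<bar> = 1"
    and "M dvd P"
  shows "\<exists>Ts :: nat \<Rightarrow> (nat list \<times> nat) set.
     (\<Union>i<M. Ts i) = cpm_edges M L P \<and>
     (\<forall>i<M. \<forall>j<M. i \<noteq> j \<longrightarrow> Ts i \<inter> Ts j = {}) \<and>
     (\<forall>i<M. card (Ts i) = P * M ^ (L - 1)) \<and>
     (\<forall>b e e'. achieves_min_dist M Q P T q b \<longrightarrow> adjacent_G M L Q P b e e' \<longrightarrow>
        (\<exists>i<M. e \<in> Ts i \<and> e' \<in> Ts i)) \<and>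
     (\<forall>e\<in>cpm_edges M L P. \<forall>e'\<in>cpm_edges M L P.
        e \<noteq> e' \<and> start_state L e = start_state L e' \<longrightarrow> \<not> (\<exists>i<M. e \<in> Ts i \<and> e' \<in> Ts i))"
proof -
  obtain k where Pk: "P = M * k" using assms(11) by (auto elim: dvdE)
  have cop: "coprime Q M" using assms(5) Pk by simp
  have M0: "M > 0" using assms(1) by simp
  define Ts where "Ts i = {e \<in> cpm_edges M L P. FF M Q e = i}" for i
  have U: "(\<Union>i<M. Ts i) = cpm_edges M L P"
  proof
    show "(\<Union>i<M. Ts i) \<subseteq> cpm_edges M L P" unfolding Ts_def by auto
    show "cpm_edges M L P \<subseteq> (\<Union>i<M. Ts i)"
    proof
      fix e assume "e \<in> cpm_edges M L P"
      moreover have "FF M Q e < M" unfolding FF_def using M0 by simp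
      ultimately show "e \<in> (\<Union>i<M. Ts i)" unfolding Ts_def by blast
    qed
  qed
  have D: "\<forall>i<M. \<forall>j<M. i \<noteq> j \<longrightarrow> Ts i \<inter> Ts j = {}" unfolding Ts_def by auto
  have C: "\<forall>i<M. card (Ts i) = P * M ^ (L - 1)"
    unfolding Ts_def using card_class[OF assms(2) cop M0] by blast
  have A: "\<forall>b e e'. achieves_min_dist M Q P T q b \<longrightarrow> adjacent_G M L Q P b e e' \<longrightarrow>
        (\<exists>i<M. e \<in> Ts i \<and> e' \<in> Ts i)"
  proof (intro allI impI)
    fix b e e' assume am: "achieves_min_dist M Q P T q b" and ad: "adjacent_G M L Q P b e e'"
    have len: "length b = 2" using assms(10) am by blast
    from ad obtain \<beta>1 a1 a2 n where ee: "e \<in> cpm_edges M L P" "e' \<in> cpm_edges M L P"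
      and sd: "start_state L e \<noteq> start_state L e'"
      and ev: "error_event M L Q P b \<beta>1 a1 a2" and n1: "1 \<le> n"
      and pr: "{e, e'} = {path_edge L Q P \<beta>1 a1 n, path_edge L Q P \<beta>1 a2 n}"
      unfolding adjacent_G_def by blast
    have z1: "\<forall>k\<le>0. a1 k = a2 k" using ev unfolding error_event_def by blast
    have "n \<noteq> 1"
    proof
      assume "n = 1"
      then have "start_state L (path_edge L Q P \<beta>1 a1 n) = start_state L (path_edge L Q P \<beta>1 a2 n)"
        using start_eq1[OF z1 assms(2)] by simp
      moreover have "e \<in> {path_edge L Q P \<beta>1 a1 n, path_edge L Q P \<beta>1 a2 n}"
        "e' \<in> {path_edge L Q P \<beta>1 a1 n, path_edge L Q P \<beta>1 a2 n}" using pr by blast+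
      ultimately show False using sd by auto
    qed
    then have n2: "2 \<le> n" using n1 by simp
    have eqF: "FF M Q (path_edge L Q P \<beta>1 a1 n) = FF M Q (path_edge L Q P \<beta>1 a2 n)"
      by (rule FF_event[OF ev len assms(11) assms(2) n2])
    have "e \<in> {path_edge L Q P \<beta>1 a1 n, path_edge L Q P \<beta>1 a2 n}"
        "e' \<in> {path_edge L Q P \<beta>1 a1 n, path_edge L Q P \<beta>1 a2 n}" using pr by blast+
    then have "FF M Q e = FF M Q e'" using eqF by auto
    moreover have "FF M Q e < M" unfolding FF_def using M0 by simp
    ultimately show "\<exists>i<M. e \<in> Ts i \<and> e' \<in> Ts i" using ee unfolding Ts_def by auto
  qed
  have S: "\<forall>e\<in>cpm_edges M L P. \<forall>e'\<in>cpm_edges M L P.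
        e \<noteq> e' \<and> start_state L e = start_state L e' \<longrightarrow> \<not> (\<exists>i<M. e \<in> Ts i \<and> e' \<in> Ts i)"
  proof (intro ballI impI notI)
    fix e e' assume e: "e \<in> cpm_edges M L P" "e' \<in> cpm_edges M L P"
      and h: "e \<noteq> e' \<and> start_state L e = start_state L e'" and ex: "\<exists>i<M. e \<in> Ts i \<and> e' \<in> Ts i"
    then have "FF M Q e = FF M Q e'" unfolding Ts_def by auto
    then have "e = e'" using same_start_eq[OF e assms(2) cop] h by blast
    then show False using h by blast
  qed
  show ?thesis using U D C A S by blast
qed

end
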